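(* Let $G=(V,E)$ be a finite simple undirected graph with $N=|V|\ge 2$ vertices. Then \[\frac{1}{N}\sum_{v\in V}\tilde C_v(G)\le C(G),\] i.e. the expected average clustering coefficient after deleting a uniformly random vertex is at most $C(G)$.
   Context: For a vertex $u$ of a graph, $d_u$ is its degree and $T(u)$ the number of triangles containing $u$; the local clustering coefficient is $C(u)=\frac{2T(u)}{d_u(d_u-1)}$ if $d_u>1$ and $C(u)=0$ otherwise. The average clustering coefficient of a graph $H$ with $n\ge1$ vertices is $C(H)=\frac1n\sum_{u\in V(H)}C(u)$ (local coefficients computed in $H$). For $v\in V$, $\tilde C_v(G)=C(G[V\setminus\{v\}])$, where $G[S]$ denotes the induced subgraph on $S$. *)

theory Defs
  imports Complex_Main
begin

definition simple_graph :: "'a set \<Rightarrow> ('a \<Rightarrow> 'a \<Rightarrow> bool) \<Rightarrow> bool" where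
  "simple_graph V E \<longleftrightarrow> finite V \<and> (\<forall>u v. E u v \<longrightarrow> E v u) \<and> (\<forall>v. \<not> E v v)
     \<and> (\<forall>u v. E u v \<longrightarrow> u \<in> V \<and> v \<in> V)"

definition nbhd :: "'a set \<Rightarrow> ('a \<Rightarrow> 'a \<Rightarrow> bool) \<Rightarrow> 'a \<Rightarrow> 'a set" where
  "nbhd S E u = {w \<in> S. E u w}"

definition deg :: "'a set \<Rightarrow> ('a \<Rightarrow> 'a \<Rightarrow> bool) \<Rightarrow> 'a \<Rightarrow> nat" where
  "deg S E u = card (nbhd S E u)"

definition triangles :: "'a set \<Rightarrow> ('a \<Rightarrow> 'a \<Rightarrow> bool) \<Rightarrow> 'a \<Rightarrow> nat" where
  "triangles S E u = card {{w, x} | w x. w \<in> nbhd S E u \<and> x \<in> nbhd S E u \<and> E w x}"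

definition local_clustering :: "'a set \<Rightarrow> ('a \<Rightarrow> 'a \<Rightarrow> bool) \<Rightarrow> 'a \<Rightarrow> real" where
  "local_clustering S E u =
     (if deg S E u > 1
      then 2 * real (triangles S E u) / (real (deg S E u) * (real (deg S E u) - 1))
      else 0)"

definition avg_clustering :: "'a set \<Rightarrow> ('a \<Rightarrow> 'a \<Rightarrow> bool) \<Rightarrow> real" where
  "avg_clustering S E = (\<Sum>u\<in>S. local_clustering S E u) / real (card S)"

definition deleted_clustering :: "'a set \<Rightarrow> ('a \<Rightarrow> 'a \<Rightarrow> bool) \<Rightarrow> 'a \<Rightarrow> real" where
  "deleted_clustering V E v = avg_clustering (V - {v}) E"

end

theory Submission
  imports Defs
begin

definition PP :: "('a \<Rightarrow> 'a \<Rightarrow> bool) \<Rightarrow> 'a set \<Rightarrow> 'a set set" where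
  "PP E N = {{w, x} | w x. w \<in> N \<and> x \<in> N \<and> E w x}"

definition lcN :: "('a \<Rightarrow> 'a \<Rightarrow> bool) \<Rightarrow> 'a set \<Rightarrow> real" where
  "lcN E N = (if card N > 1 then 2 * real (card (PP E N)) / (real (card N) * (real (card N) - 1)) else 0)"

lemma lc_eq: "local_clustering S E u = lcN E (nbhd S E u)"
  unfolding local_clustering_def lcN_def deg_def triangles_def PP_def by simp

lemma lcN_nonneg: "lcN E N \<ge> 0"
  unfolding lcN_def by auto

lemma PP_sub: "PP E N \<subseteq> Pow N" unfolding PP_def by auto

lemma PP_finite: "finite N \<Longrightarrow> finite (PP E N)"
  using PP_sub by (metis finite_Pow_iff finite_subset)

lemma PP_remove: "PP E (N - {v}) = {p \<in> PP E N. v \<notin> p}"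
  unfolding PP_def by auto

lemma PP_card2: "(\<forall>w. \<not> E w w) \<Longrightarrow> p \<in> PP E N \<Longrightarrow> card p = 2 \<and> p \<subseteq> N"
  unfolding PP_def by (auto simp: card_insert_if)

lemma PP_sum:
  assumes fin: "finite N" and irr: "\<forall>w. \<not> E w w"
  shows "(\<Sum>v\<in>N. card (PP E (N - {v}))) = (card N - 2) * card (PP E N)"
proof -
  have "(\<Sum>v\<in>N. card (PP E (N - {v}))) = (\<Sum>v\<in>N. \<Sum>p\<in>PP E N. if v \<notin> p then 1 else 0)"
    unfolding PP_remove using PP_finite[OF fin]
    by (simp add: sum.inter_filter[symmetric])
  also have "\<dots> = (\<Sum>p\<in>PP E N. \<Sum>v\<in>N. if v \<notin> p then 1 else 0)"
    by (rule sum.swap)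
  also have "\<dots> = (\<Sum>p\<in>PP E N. card N - 2)"
  proof (rule sum.cong)
    fix p assume p: "p \<in> PP E N"
    have "(\<Sum>v\<in>N. if v \<notin> p then 1 else 0) = card {v\<in>N. v \<notin> p}"
      using fin by (simp add: sum.inter_filter[symmetric])
    also have "{v\<in>N. v \<notin> p} = N - p" by auto
    also have "card (N - p) = card N - 2"
      using PP_card2[OF irr p] fin by (metis card_Diff_subset finite_subset)
    finally show "(\<Sum>v\<in>N. if v \<notin> p then 1 else 0) = card N - 2" .
  qed simp
  finally show ?thesis by simp
qed

lemma lcN_sum:
  assumes fin: "finite N" and irr: "\<forall>w. \<not> E w w"
  shows "(\<Sum>v\<in>N. lcN E (N - {v})) \<le> real (card N) * lcN E N"
proof (cases "card N \<ge> 3")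
  case False
  have "(\<Sum>v\<in>N. lcN E (N - {v})) = 0"
  proof (rule sum.neutral, intro ballI)
    fix v assume "v \<in> N"
    hence "card (N - {v}) = card N - 1" using fin by simp
    thus "lcN E (N - {v}) = 0" using False unfolding lcN_def by auto
  qed
  thus ?thesis using lcN_nonneg[of E N] by simp
next
  case True
  define d where "d = card N"
  define T where "T = card (PP E N)"
  have d3: "real d \<ge> 3" using True d_def by simp
  have "(\<Sum>v\<in>N. lcN E (N - {v})) = (\<Sum>v\<in>N. 2 * real (card (PP E (N - {v}))) / ((real d - 1) * (real d - 2)))"
  proof (rule sum.cong)
    fix v assume "v \<in> N"
    hence c: "card (N - {v}) = d - 1" using fin d_def by simp
    have "real (d - 1) = real d - 1" "real (d - 1) - 1 = real d - 2" using True d_def by auto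
    thus "lcN E (N - {v}) = 2 * real (card (PP E (N - {v}))) / ((real d - 1) * (real d - 2))"
      unfolding lcN_def c using True d_def by simp
  qed simp
  also have "\<dots> = 2 * real (\<Sum>v\<in>N. card (PP E (N - {v}))) / ((real d - 1) * (real d - 2))"
    by (simp add: sum_divide_distrib[symmetric] sum_distrib_left[symmetric])
  also have "\<dots> = 2 * ((real d - 2) * real T) / ((real d - 1) * (real d - 2))"
    unfolding PP_sum[of N E, OF fin irr] using True d_def T_def by (simp add: of_nat_diff)
  also have "\<dots> = real d * (2 * real T / (real d * (real d - 1)))"
  proof -
    have a: "real d - 1 \<noteq> 0" "real d - 2 \<noteq> 0" "real d \<noteq> 0" using d3 by auto
    show ?thesis using a by (simp add: divide_simps)
  qed
  also have "\<dots> = real (card N) * lcN E N"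
    unfolding lcN_def d_def T_def using True by simp
  finally show ?thesis by simp
qed

lemma local_ineq:
  assumes G: "simple_graph V E" and u: "u \<in> V"
  shows "(\<Sum>v\<in>V - {u}. local_clustering (V - {v}) E u) \<le> real (card V - 1) * local_clustering V E u"
proof -
  have fin: "finite V" and irr: "\<forall>w. \<not> E w w" using G unfolding simple_graph_def by auto
  define N where "N = nbhd V E u"
  have NV: "N \<subseteq> V - {u}" unfolding N_def nbhd_def using irr by auto
  have finN: "finite N" using NV fin finite_subset by blast
  have split: "V - {u} = N \<union> (V - {u} - N)" using NV by auto
  have "(\<Sum>v\<in>V - {u}. local_clustering (V - {v}) E u)
      = (\<Sum>v\<in>N. local_clustering (V - {v}) E u) + (\<Sum>v\<in>V - {u} - N. local_clustering (V - {v}) E u)"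
    by (subst split, rule sum.union_disjoint) (use fin finN in auto)
  also have "(\<Sum>v\<in>N. local_clustering (V - {v}) E u) = (\<Sum>v\<in>N. lcN E (N - {v}))"
  proof (rule sum.cong)
    fix v assume "v \<in> N"
    have "nbhd (V - {v}) E u = N - {v}" unfolding N_def nbhd_def by auto
    thus "local_clustering (V - {v}) E u = lcN E (N - {v})" by (simp add: lc_eq)
  qed simp
  also have "(\<Sum>v\<in>V - {u} - N. local_clustering (V - {v}) E u) = (\<Sum>v\<in>V - {u} - N. lcN E N)"
  proof (rule sum.cong)
    fix v assume "v \<in> V - {u} - N"
    hence "nbhd (V - {v}) E u = N" unfolding N_def nbhd_def by auto
    thus "local_clustering (V - {v}) E u = lcN E N" by (simp add: lc_eq)
  qed simp
  also have "\<dots> = real (card (V - {u} - N)) * lcN E N" by simp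
  also have "card (V - {u} - N) = card (V - {u}) - card N"
    using NV fin by (simp add: card_Diff_subset finN)
  finally have "(\<Sum>v\<in>V - {u}. local_clustering (V - {v}) E u)
      \<le> real (card N) * lcN E N + real (card (V - {u}) - card N) * lcN E N"
    using lcN_sum[of N E, OF finN irr] by linarith
  also have "\<dots> = real (card (V - {u})) * lcN E N"
  proof -
    have "card N \<le> card (V - {u})" using NV fin by (simp add: card_mono)
    thus ?thesis by (simp add: of_nat_diff algebra_simps)
  qed
  also have "\<dots> = real (card V - 1) * local_clustering V E u"
    using u fin by (simp add: lc_eq N_def)
  finally show ?thesis .
qed

theorem mainTheorem6:
  fixes V :: "'a set" and E :: "'a \<Rightarrow> 'a \<Rightarrow> bool"
  assumes "simple_graph V E" and "card V \<ge> 2"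
  shows "(\<Sum>v\<in>V. deleted_clustering V E v) / real (card V) \<le> avg_clustering V E"
proof -
  have fin: "finite V" using assms(1) unfolding simple_graph_def by auto
  define M where "M = real (card V - 1)"
  have M: "M > 0" using assms(2) M_def by simp
  have cd: "card (V - {v}) = card V - 1" if "v \<in> V" for v using that fin by simp
  have "(\<Sum>v\<in>V. deleted_clustering V E v) = (\<Sum>v\<in>V. (\<Sum>u\<in>V - {v}. local_clustering (V - {v}) E u) / M)"
    unfolding deleted_clustering_def avg_clustering_def M_def by (rule sum.cong) (auto simp: cd)
  also have "\<dots> = (\<Sum>v\<in>V. \<Sum>u\<in>V. if u \<noteq> v then local_clustering (V - {v}) E u else 0) / M"
    using fin by (simp add: sum_divide_distrib[symmetric] sum.inter_filter[symmetric] set_diff_eq conj_commute)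
  also have "(\<Sum>v\<in>V. \<Sum>u\<in>V. if u \<noteq> v then local_clustering (V - {v}) E u else 0)
      = (\<Sum>u\<in>V. \<Sum>v\<in>V. if u \<noteq> v then local_clustering (V - {v}) E u else 0)"
    by (rule sum.swap)
  also have "\<dots> = (\<Sum>u\<in>V. \<Sum>v\<in>V - {u}. local_clustering (V - {v}) E u)"
    using fin by (simp add: sum.inter_filter[symmetric] set_diff_eq eq_commute)
  also have "\<dots> \<le> (\<Sum>u\<in>V. M * local_clustering V E u)"
    unfolding M_def by (rule sum_mono) (rule local_ineq[OF assms(1)])
  finally have "(\<Sum>v\<in>V. deleted_clustering V E v) \<le> (\<Sum>u\<in>V. M * local_clustering V E u) / M"
    using M by (simp add: divide_right_mono)
  also have "\<dots> = (\<Sum>u\<in>V. local_clustering V E u)"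
    using M by (simp add: sum_distrib_left[symmetric])
  finally show ?thesis unfolding avg_clustering_def
    by (simp add: divide_right_mono)
qed

end
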